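(* Let $\Gamma=\sum_{j=1}^k w_j\delta_{\mu_j}$ be a $k$-atomic distribution on $\mathbb R^d$, and let $\Sigma=\mathbb E_{U\sim\Gamma}[UU^\top]=\sum_{j=1}^k w_j\mu_j\mu_j^\top$ with eigenvalues $\lambda_1\ge\dots\ge\lambda_d$. Let $\Sigma'$ be any symmetric $d\times d$ matrix and $\Pi'_r$ the orthogonal projection matrix onto the span of the top $r$ eigenvectors of $\Sigma'$. Then $$W_2^2(\Gamma,\Gamma_{\Pi'_r})\le k\big(\lambda_{r+1}+2\|\Sigma-\Sigma'\|_2\big).$$
   Context: For a $d\times d$ matrix $A$, $\Gamma_A$ denotes the law of $AU$ with $U\sim\Gamma$. $\|\cdot\|_2$ of a matrix is the spectral (operator) norm. $W_2(\Gamma,\Gamma')=(\inf\mathbb E\|U-U'\|_2^2)^{1/2}$ over couplings. Set $\lambda_{d+1}=0$ if $r=d$. *)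

theory Defs
  imports "HOL-Analysis.Analysis" "HOL-Probability.Probability"
begin

definition outer :: "real^'n \<Rightarrow> real^'n \<Rightarrow> real^'n^'n" where
  "outer u v = (\<chi> i j. u $ i * v $ j)"

definition push_mat :: "real^'n^'n \<Rightarrow> (real^'n) pmf \<Rightarrow> (real^'n) pmf" where
  "push_mat A G = map_pmf (\<lambda>u. A *v u) G"

text \<open>2-Wasserstein distance between (discrete) distributions; couplings of
 discrete distributions are themselves discrete, so couplings are pmfs on pairs.\<close>
definition W2 :: "(real^'n) pmf \<Rightarrow> (real^'n) pmf \<Rightarrow> real" where
  "W2 p q = sqrt (Inf ((\<lambda>c. measure_pmf.expectation c (\<lambda>(x,y). (norm (x - y))\<^sup>2)) `
             {c. map_pmf fst c = p \<and> map_pmf snd c = q}))"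

definition sorted_eigenbasis :: "real^'n^'n \<Rightarrow> (nat \<Rightarrow> real) \<Rightarrow> (nat \<Rightarrow> real^'n) \<Rightarrow> bool" where
  "sorted_eigenbasis A lam v \<longleftrightarrow>
     (\<forall>i<CARD('n). \<forall>j<CARD('n). v i \<bullet> v j = (if i = j then 1 else 0)) \<and>
     (\<forall>i<CARD('n). A *v v i = lam i *\<^sub>R v i) \<and>
     (\<forall>i j. i \<le> j \<longrightarrow> j < CARD('n) \<longrightarrow> lam j \<le> lam i)"

definition sorted_eigenvalues :: "real^'n^'n \<Rightarrow> (nat \<Rightarrow> real) \<Rightarrow> bool" where
  "sorted_eigenvalues A lam \<longleftrightarrow> (\<exists>v. sorted_eigenbasis A lam v)"

end

theory Submission
  imports Defs
begin

definition ortho :: "(nat \<Rightarrow> real^'n) \<Rightarrow> bool" where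
 "ortho e \<longleftrightarrow> (\<forall>i<CARD('n). \<forall>j<CARD('n). e i \<bullet> e j = (if i = j then 1 else 0))"

lemma ortho_span:
  fixes e :: "nat \<Rightarrow> real^'n"
  assumes "ortho e"
  shows "UNIV \<subseteq> span (e ` {..<CARD('n)})"
proof -
  have inj: "inj_on e {..<CARD('n)}"
  proof (rule inj_onI)
    fix i j assume "i \<in> {..<CARD('n)}" "j \<in> {..<CARD('n)}" "e i = e j"
    then show "i = j" using assms unfolding ortho_def
      by (metis lessThan_iff zero_neq_one)
  qed
  have "independent (e ` {..<CARD('n)})"
  proof (rule pairwise_orthogonal_independent)
    show "pairwise orthogonal (e ` {..<CARD('n)})"
      using assms unfolding ortho_def pairwise_def orthogonal_def by auto
    show "0 \<notin> e ` {..<CARD('n)}"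
      using assms unfolding ortho_def by force
  qed
  moreover have "dim (UNIV :: (real^'n) set) \<le> card (e ` {..<CARD('n)})"
    using inj by (simp add: card_image)
  ultimately show ?thesis by (intro card_ge_dim_independent) auto
qed

lemma ortho_expand:
  fixes e :: "nat \<Rightarrow> real^'n"
  assumes "ortho e"
  shows "x = (\<Sum>i<CARD('n). (x \<bullet> e i) *\<^sub>R e i)"
proof -
  define y where "y = x - (\<Sum>i<CARD('n). (x \<bullet> e i) *\<^sub>R e i)"
  have c: "y \<bullet> e j = 0" if "j < CARD('n)" for j
  proof -
    have "(\<Sum>i<CARD('n). (x \<bullet> e i) *\<^sub>R e i) \<bullet> e j = (\<Sum>i<CARD('n). (x \<bullet> e i) * (e i \<bullet> e j))"
      by (simp add: inner_sum_left)
    also have "\<dots> = (\<Sum>i<CARD('n). if i = j then x \<bullet> e j else 0)"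
      using assms that unfolding ortho_def by (intro sum.cong) auto
    also have "\<dots> = x \<bullet> e j" using that by simp
    finally show ?thesis unfolding y_def by (simp add: inner_diff_left)
  qed
  have "orthogonal y y"
    using ortho_span[OF assms] c
    by (intro orthogonal_to_span[of y]) (auto simp: orthogonal_def)
  then show ?thesis unfolding y_def by (simp add: orthogonal_self)
qed

lemma ortho_quad:
  fixes e :: "nat \<Rightarrow> real^'n"
  assumes "ortho e" and ev: "\<And>i. i < CARD('n) \<Longrightarrow> A *v e i = lam i *\<^sub>R e i"
  shows "x \<bullet> (A *v x) = (\<Sum>i<CARD('n). lam i * (x \<bullet> e i)^2)"
    and "x \<bullet> x = (\<Sum>i<CARD('n). (x \<bullet> e i)^2)"
proof -
  have "A *v x = A *v (\<Sum>i<CARD('n). (x \<bullet> e i) *\<^sub>R e i)"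
    using ortho_expand[OF assms(1)] by metis
  also have "\<dots> = (\<Sum>i<CARD('n). (x \<bullet> e i) *\<^sub>R (A *v e i))"
    by (simp add: linear_sum[OF matrix_vector_mul_linear] linear_scale[OF matrix_vector_mul_linear])
  also have "\<dots> = (\<Sum>i<CARD('n). (x \<bullet> e i * lam i) *\<^sub>R e i)"
    using ev by (intro sum.cong) auto
  finally show "x \<bullet> (A *v x) = (\<Sum>i<CARD('n). lam i * (x \<bullet> e i)^2)"
    by (simp add: inner_sum_right power2_eq_square mult_ac)
  have "x \<bullet> x = x \<bullet> (\<Sum>i<CARD('n). (x \<bullet> e i) *\<^sub>R e i)"
    using ortho_expand[OF assms(1)] by metis
  then show "x \<bullet> x = (\<Sum>i<CARD('n). (x \<bullet> e i)^2)"
    by (simp add: inner_sum_right power2_eq_square)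
qed

lemma ortho_upper:
  fixes e :: "nat \<Rightarrow> real^'n"
  assumes "ortho e" and ev: "\<And>i. i < CARD('n) \<Longrightarrow> A *v e i = lam i *\<^sub>R e i"
    and mono: "\<And>i j. i \<le> j \<Longrightarrow> j < CARD('n) \<Longrightarrow> lam j \<le> lam i"
    and rd: "r < CARD('n)" and z: "\<And>i. i < r \<Longrightarrow> x \<bullet> e i = 0"
  shows "x \<bullet> (A *v x) \<le> lam r * (x \<bullet> x)"
proof -
  have "(\<Sum>i<CARD('n). lam i * (x \<bullet> e i)^2) \<le> (\<Sum>i<CARD('n). lam r * (x \<bullet> e i)^2)"
  proof (rule sum_mono)
    fix i assume i: "i \<in> {..<CARD('n)}"
    show "lam i * (x \<bullet> e i)^2 \<le> lam r * (x \<bullet> e i)^2"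
    proof (cases "i < r")
      case True then show ?thesis using z by simp
    next
      case False then have "lam i \<le> lam r" using mono i by auto
      then show ?thesis by (intro mult_right_mono) auto
    qed
  qed
  then show ?thesis using ortho_quad[OF assms(1) ev, of x] by (simp add: sum_distrib_left)
qed

lemma ortho_lower:
  fixes e :: "nat \<Rightarrow> real^'n"
  assumes "ortho e" and ev: "\<And>i. i < CARD('n) \<Longrightarrow> A *v e i = lam i *\<^sub>R e i"
    and mono: "\<And>i j. i \<le> j \<Longrightarrow> j < CARD('n) \<Longrightarrow> lam j \<le> lam i"
    and rd: "r < CARD('n)" and z: "\<And>i. r < i \<Longrightarrow> i < CARD('n) \<Longrightarrow> x \<bullet> e i = 0"
  shows "lam r * (x \<bullet> x) \<le> x \<bullet> (A *v x)"
proof -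
  have "(\<Sum>i<CARD('n). lam r * (x \<bullet> e i)^2) \<le> (\<Sum>i<CARD('n). lam i * (x \<bullet> e i)^2)"
  proof (rule sum_mono)
    fix i assume i: "i \<in> {..<CARD('n)}"
    show "lam r * (x \<bullet> e i)^2 \<le> lam i * (x \<bullet> e i)^2"
    proof (cases "r < i")
      case True then show ?thesis using z i by simp
    next
      case False then have "lam r \<le> lam i" using mono rd by auto
      then show ?thesis by (intro mult_right_mono) auto
    qed
  qed
  then show ?thesis using ortho_quad[OF assms(1) ev, of x] by (simp add: sum_distrib_left)
qed

lemma outer_mult: "outer u u *v y = (u \<bullet> y) *\<^sub>R u"
  by (simp add: vec_eq_iff outer_def matrix_vector_mult_def inner_vec_def sum_distrib_left mult_ac)

lemma sum_mat_mult:
  fixes f :: "'a \<Rightarrow> real^'n^'n"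
  shows "(\<Sum>a\<in>S. c a *\<^sub>R f a) *v y = (\<Sum>a\<in>S. c a *\<^sub>R (f a *v y))"
  by (simp add: vec_eq_iff matrix_vector_mult_def sum_distrib_left sum_component mult_ac
       sum.swap[of _ S])

lemma sum_mat_mult1:
  fixes f :: "'a \<Rightarrow> real^'n^'n"
  shows "(\<Sum>a\<in>S. f a) *v y = (\<Sum>a\<in>S. (f a *v y))"
  using sum_mat_mult[of "\<lambda>_. 1" f S y] by simp

theorem mainTheorem5:
  fixes \<Gamma> :: "(real^'d) pmf" and k r :: nat
    and \<Sigma> \<Sigma>' :: "real^'d^'d"
    and lam lam' :: "nat \<Rightarrow> real" and v' :: "nat \<Rightarrow> real^'d"
  assumes katomic: "finite (set_pmf \<Gamma>)" "card (set_pmf \<Gamma>) \<le> k"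
    and Sigma: "\<Sigma> = measure_pmf.expectation \<Gamma> (\<lambda>u. outer u u)"
    and eig: "sorted_eigenvalues \<Sigma> lam"
    and sym: "transpose \<Sigma>' = \<Sigma>'"
    and eig': "sorted_eigenbasis \<Sigma>' lam' v'"
    and r: "1 \<le> r" "r \<le> CARD('d)"
  shows "(W2 \<Gamma> (push_mat (\<Sum>i<r. outer (v' i) (v' i)) \<Gamma>))\<^sup>2
           \<le> real k * ((if r < CARD('d) then lam r else 0)
                       + 2 * onorm (\<lambda>x. (\<Sigma> - \<Sigma>') *v x))"
proof -
  define P where "P = (\<Sum>i<r. outer (v' i) (v' i))"
  define S where "S = set_pmf \<Gamma>"
  define \<epsilon> where "\<epsilon> = onorm (\<lambda>x. (\<Sigma> - \<Sigma>') *v x)"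
  define T where "T = (if r < CARD('d) then lam r else 0) + 2 * \<epsilon>"
  obtain v where v: "sorted_eigenbasis \<Sigma> lam v"
    using eig unfolding sorted_eigenvalues_def by blast
  have ov: "ortho v" and evv: "\<And>i. i < CARD('d) \<Longrightarrow> \<Sigma> *v v i = lam i *\<^sub>R v i"
    and mv: "\<And>i j. i \<le> j \<Longrightarrow> j < CARD('d) \<Longrightarrow> lam j \<le> lam i"
    using v unfolding sorted_eigenbasis_def ortho_def by auto
  have ov': "ortho v'" and evv': "\<And>i. i < CARD('d) \<Longrightarrow> \<Sigma>' *v v' i = lam' i *\<^sub>R v' i"
    and mv': "\<And>i j. i \<le> j \<Longrightarrow> j < CARD('d) \<Longrightarrow> lam' j \<le> lam' i"
    using eig' unfolding sorted_eigenbasis_def ortho_def by auto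
  have fin: "finite S" using katomic S_def by simp
  have Sig: "\<Sigma> = (\<Sum>a\<in>S. pmf \<Gamma> a *\<^sub>R outer a a)"
    unfolding Sigma S_def by (rule integral_measure_pmf) (use fin S_def in auto)
  have quadS: "y \<bullet> (\<Sigma> *v y) = (\<Sum>a\<in>S. pmf \<Gamma> a * (a \<bullet> y)^2)" for y
    unfolding Sig sum_mat_mult outer_mult
    by (simp add: inner_sum_right power2_eq_square mult_ac inner_commute)
  have bl: "bounded_linear (\<lambda>x. (\<Sigma> - \<Sigma>') *v x)"
    using matrix_vector_mul_linear linear_conv_bounded_linear by blast
  have eps0: "\<epsilon> \<ge> 0" unfolding \<epsilon>_def using onorm_pos_le[OF bl] .
  have close: "y \<bullet> (\<Sigma> *v y) \<le> y \<bullet> (\<Sigma>' *v y) + \<epsilon> * (y \<bullet> y) \<and>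
      y \<bullet> (\<Sigma>' *v y) \<le> y \<bullet> (\<Sigma> *v y) + \<epsilon> * (y \<bullet> y)" for y
  proof -
    have "\<bar>y \<bullet> ((\<Sigma> - \<Sigma>') *v y)\<bar> \<le> norm y * norm ((\<Sigma> - \<Sigma>') *v y)"
      by (rule Cauchy_Schwarz_ineq2)
    also have "\<dots> \<le> norm y * (\<epsilon> * norm y)"
      unfolding \<epsilon>_def by (intro mult_left_mono onorm[OF bl]) auto
    also have "\<dots> = \<epsilon> * (y \<bullet> y)" by (simp add: dot_square_norm power2_eq_square)
    finally have "\<bar>y \<bullet> (\<Sigma> *v y) - y \<bullet> (\<Sigma>' *v y)\<bar> \<le> \<epsilon> * (y \<bullet> y)"
      by (simp add: matrix_vector_mult_diff_rdistrib inner_diff_right)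
    then show ?thesis by linarith
  qed
  have weyl: "lam' r \<le> lam r + \<epsilon>" if rd: "r < CARD('d)"
  proof -
    define W where "W = v ` {..<r} \<union> v' ` {r<..<CARD('d)}"
    have "card W \<le> card (v ` {..<r}) + card (v' ` {r<..<CARD('d)})"
      unfolding W_def by (rule card_Un_le)
    also have "\<dots> \<le> r + (CARD('d) - Suc r)"
      by (intro add_mono card_image_le[THEN order_trans]) auto
    finally have "card W < CARD('d)" using rd by linarith
    moreover have "dim W \<le> card W" using W_def by (intro dim_le_card) (auto intro: span_base)
    ultimately have "dim W < DIM(real^'d)" by simp
    then obtain x :: "real^'d" where x0: "x \<noteq> 0" and xo: "\<And>y. y \<in> span W \<Longrightarrow> orthogonal x y"
      by (rule orthogonal_to_subspace_exists) blast+
    have z1: "x \<bullet> v i = 0" if "i < r" for i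
      using xo[of "v i"] that W_def span_base[of "v i" W] by (auto simp: orthogonal_def)
    have z2: "x \<bullet> v' i = 0" if "r < i" "i < CARD('d)" for i
      using xo[of "v' i"] that W_def span_base[of "v' i" W] by (auto simp: orthogonal_def)
    have "lam' r * (x \<bullet> x) \<le> x \<bullet> (\<Sigma>' *v x)"
      by (rule ortho_lower[OF ov' evv' mv' rd z2])
    also have "\<dots> \<le> x \<bullet> (\<Sigma> *v x) + \<epsilon> * (x \<bullet> x)" using close by blast
    also have "x \<bullet> (\<Sigma> *v x) \<le> lam r * (x \<bullet> x)"
      by (rule ortho_upper[OF ov evv mv rd z1])
    finally have "lam' r * (x \<bullet> x) \<le> (lam r + \<epsilon>) * (x \<bullet> x)" by (simp add: algebra_simps)
    moreover have "x \<bullet> x > 0" using x0 by simp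
    ultimately show ?thesis by simp
  qed
  have T0: "T \<ge> 0"
  proof (cases "r < CARD('d)")
    case True
    have "lam r = lam r * (v r \<bullet> v r)" using ov True unfolding ortho_def by simp
    also have "\<dots> = v r \<bullet> (\<Sigma> *v v r)" using evv[OF True] by simp
    also have "\<dots> \<ge> 0" unfolding quadS by (intro sum_nonneg) auto
    finally show ?thesis unfolding T_def using eps0 by simp
  qed (use eps0 T_def in simp)
  have Pmu: "P *v u = (\<Sum>i<r. (v' i \<bullet> u) *\<^sub>R v' i)" for u
    unfolding P_def sum_mat_mult1 outer_mult ..
  have trm: "pmf \<Gamma> a * (norm (a - P *v a))^2 \<le> T" if a: "a \<in> S" for a
  proof -
    define y where "y = a - P *v a"
    have yv: "y \<bullet> v' j = 0" if "j < r" for j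
    proof -
      have "(\<Sum>i<r. (v' i \<bullet> a) *\<^sub>R v' i) \<bullet> v' j = (\<Sum>i<r. (v' i \<bullet> a) * (v' i \<bullet> v' j))"
        by (simp add: inner_sum_left)
      also have "\<dots> = (\<Sum>i<r. if i = j then v' j \<bullet> a else 0)"
        using ov' that r unfolding ortho_def by (intro sum.cong) auto
      also have "\<dots> = v' j \<bullet> a" using that by simp
      finally show ?thesis unfolding y_def Pmu by (simp add: inner_diff_right inner_commute)
    qed
    have yP: "y \<bullet> (P *v a) = 0"
      unfolding Pmu by (simp add: inner_sum_right yv)
    have ya: "a \<bullet> y = y \<bullet> y"
    proof -
      have "a = y + P *v a" unfolding y_def by simp
      then have "a \<bullet> y = (y + P *v a) \<bullet> y" by simp
      then show ?thesis using yP by (simp add: inner_add_left inner_add_right inner_commute)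
    qed
    have ny: "(norm (a - P *v a))^2 = y \<bullet> y" unfolding y_def by (simp add: dot_square_norm)
    show ?thesis
    proof (cases "r < CARD('d)")
      case False
      then have rd: "r = CARD('d)" using r by simp
      have "y = (\<Sum>i<CARD('d). (y \<bullet> v' i) *\<^sub>R v' i)" by (rule ortho_expand[OF ov'])
      also have "\<dots> = 0" using yv rd by simp
      finally show ?thesis using ny T0 by simp
    next
      case True
      have "pmf \<Gamma> a * (y \<bullet> y)^2 = pmf \<Gamma> a * (a \<bullet> y)^2" using ya by simp
      also have "\<dots> \<le> (\<Sum>a\<in>S. pmf \<Gamma> a * (a \<bullet> y)^2)"
        by (rule member_le_sum[OF a]) (auto simp: fin)
      also have "\<dots> = y \<bullet> (\<Sigma> *v y)" by (simp add: quadS)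
      also have "\<dots> \<le> y \<bullet> (\<Sigma>' *v y) + \<epsilon> * (y \<bullet> y)" using close by blast
      also have "y \<bullet> (\<Sigma>' *v y) \<le> lam' r * (y \<bullet> y)"
        by (rule ortho_upper[OF ov' evv' mv' True yv])
      also have "lam' r * (y \<bullet> y) + \<epsilon> * (y \<bullet> y) \<le> T * (y \<bullet> y)"
        using mult_right_mono[OF weyl[OF True] inner_ge_zero[of y]] True unfolding T_def
        by (simp add: algebra_simps)
      finally have le: "pmf \<Gamma> a * (y \<bullet> y)^2 \<le> T * (y \<bullet> y)" by simp
      show ?thesis
      proof (cases "y = 0")
        case True then show ?thesis using ny T0 by simp
      next
        case False
        then have yy: "y \<bullet> y > 0" by simp
        have "(pmf \<Gamma> a * (y \<bullet> y)) * (y \<bullet> y) \<le> T * (y \<bullet> y)"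
          using le by (simp add: power2_eq_square mult_ac)
        then have "pmf \<Gamma> a * (y \<bullet> y) \<le> T" using yy by simp
        then show ?thesis using ny by simp
      qed
    qed
  qed
  define f where "f = (\<lambda>(x::real^'d, y::real^'d). (norm (x - y))\<^sup>2)"
  define C where "C = {c. map_pmf fst c = \<Gamma> \<and> map_pmf snd c = push_mat P \<Gamma>}"
  define c0 where "c0 = map_pmf (\<lambda>u. (u, P *v u)) \<Gamma>"
  have c0C: "c0 \<in> C"
    unfolding C_def c0_def push_mat_def by (simp add: map_pmf_comp)
  have nn: "\<And>c. 0 \<le> measure_pmf.expectation c f"
    unfolding f_def by (intro Bochner_Integration.integral_nonneg) (auto split: prod.splits)
  have img0: "Inf ((\<lambda>c. measure_pmf.expectation c f) ` C) \<ge> 0"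
    using c0C nn by (intro cInf_greatest) auto
  have "(W2 \<Gamma> (push_mat P \<Gamma>))\<^sup>2 = Inf ((\<lambda>c. measure_pmf.expectation c f) ` C)"
    unfolding W2_def C_def[symmetric] f_def[symmetric] using img0 by simp
  also have "\<dots> \<le> measure_pmf.expectation c0 f"
    using c0C nn by (intro cInf_lower bdd_belowI[where m=0]) auto
  also have "\<dots> = measure_pmf.expectation \<Gamma> (\<lambda>u. (norm (u - P *v u))^2)"
    unfolding c0_def f_def by simp
  also have "\<dots> = (\<Sum>a\<in>S. (norm (a - P *v a))^2 * pmf \<Gamma> a)"
    by (rule integral_measure_pmf_real) (use fin S_def in auto)
  also have "\<dots> \<le> (\<Sum>a\<in>S. T)"
    using trm by (intro sum_mono) (simp add: mult.commute)
  also have "\<dots> = card S * T" by simp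
  also have "\<dots> \<le> k * T" using katomic S_def T0 by (intro mult_right_mono) auto
  finally show ?thesis unfolding P_def T_def \<epsilon>_def .
qed

end
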